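(* Consider the algorithm MoBIL-VI described in the context with weights $w_n=n^p$ and $p=0$. Then $$\mathcal R(0)\le\frac{G_h^2}{2\mu_f\mu_h}\frac1N+\frac{\epsilon^w_{\hat{\mathcal F}}}{2\mu_f}\frac{\ln N+1}{N}.$$
   Context: Setting: $\Pi$ is a compact convex subset of a normed space (norm $\|\cdot\|$, dual norm $\|\cdot\|_*$) of policies; $d_\pi$ is a distribution over state–time pairs induced by $\pi$; $\pi^*$ is an expert policy and $D(\pi^*_s\|\pi_s)\ge0$ a discrepancy; $F(\pi',\pi)=\mathbb E_{(s,t)\sim d_{\pi'}}[D(\pi^*_s\|\pi_s)]$ and $\nabla_2F$ is its gradient in the second argument. $\hat{\mathcal F}$ is a convex set (in a normed space) of "predictive models" $\hat F$, each a bivariate function on $\Pi\times\Pi$ with gradient $\nabla_2\hat F$ in the second argument; assume there is $L\ge0$ with $\|\nabla_2\hat F(\pi,\pi)-\nabla_2\hat F(\pi',\pi')\|_*\le L\|\pi-\pi'\|$ for all $\hat F\in\hat{\mathcal F}$, $\pi,\pi'\in\Pi$. Online learning: in round $n$ the learner plays $\pi_n$, the policy cost is $f_n(\pi)=F(\pi_n,\pi)$, and the model cost $h_n:\hat{\mathcal F}\to\mathbb R$ satisfies $h_n(\hat F)\ge\|\nabla_2F(\pi_n,\pi_n)-\nabla_2\hat F(\pi_n,\pi_n)\|_*^2$. Assume each $f_n$ is $\mu_f$-strongly convex with $\|\nabla f_n(\pi)\|_*\le G_f$ on $\Pi$, and each $h_n$ is $\mu_h$-strongly convex with $\|\nabla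 h_n(\hat F)\|_*\le G_h$ on $\hat{\mathcal F}$ ($\mu_f,\mu_h>0$). MoBIL-VI (deterministic: $\tilde f_n=f_n$, $\tilde h_n=h_n$): with weights $w_n=n^p$, in round $n$ update the model by $\hat F_{n+1}\in\operatorname{arg\,min}_{\hat F\in\hat{\mathcal F}}\sum_{m=1}^n\frac{w_m}{m}h_m(\hat F)$, and then set $\pi_{n+1}\in\Pi$ to be an (exact) solution of the variational inequality $\langle\Phi_n(\pi_{n+1}),\pi'-\pi_{n+1}\rangle\ge0$ for all $\pi'\in\Pi$, where $\Phi_n(\pi)=\sum_{m=1}^n w_m\nabla f_m(\pi)+w_{n+1}\nabla_2\hat F_{n+1}(\pi,\pi)$. Define $\mathrm{regret}^w(\Pi)=\max_{\pi\in\Pi}\sum_{n=1}^N w_n(f_n(\pi_n)-f_n(\pi))$ and $\mathcal R(p)=\mathrm{regret}^w(\Pi)/w_{1:N}$, $w_{1:N}=\sum_{n=1}^N w_n$. The constant $\epsilon^w_{\hat{\mathcal F}}$ satisfies: for all $N$ and weights $\theta_n>0$ with $\sum_{n=1}^N\theta_n=1$, $\max_{\{\pi_n\in\Pi\}}\min_{\hat F\in\hat{\mathcal F}}\sum_{n=1}^N\theta_n h_n(\hat F)\le\epsilon^w_{\hat{\mathcal F}}$.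
   Formalization: The initial policy $\pi_1$ solves the variational inequality $\langle\Phi_0(\pi_1),\pi'-\pi_1\rangle\ge0$ for all $\pi'\in\Pi$, where $\Phi_0(\pi)=w_1\nabla_2\hat F_1(\pi,\pi)$ for some $\hat F_1\in\hat{\mathcal F}$. The statement above fails without it. *)

theory Defs
  imports "HOL-Analysis.Analysis"
begin

definition strongly_convex_on :: "'a::real_normed_vector set \<Rightarrow> real \<Rightarrow> ('a \<Rightarrow> real) \<Rightarrow> bool" where
  "strongly_convex_on S \<mu> f \<longleftrightarrow> convex S \<and>
     (\<forall>x\<in>S. \<forall>y\<in>S. \<forall>t\<in>{0..1}.
        f (t *\<^sub>R x + (1 - t) *\<^sub>R y) \<le> t * f x + (1 - t) * f y - \<mu> / 2 * t * (1 - t) * (norm (x - y))\<^sup>2)"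

definition mobil_w :: "real \<Rightarrow> nat \<Rightarrow> real" where
  "mobil_w p n = real n powr p"

definition Phi :: "real \<Rightarrow> ('a \<Rightarrow> 'a \<Rightarrow> ('a::real_normed_vector \<Rightarrow>\<^sub>L real))
     \<Rightarrow> ('b \<Rightarrow> 'a \<Rightarrow> 'a \<Rightarrow> ('a \<Rightarrow>\<^sub>L real)) \<Rightarrow> (nat \<Rightarrow> 'a) \<Rightarrow> (nat \<Rightarrow> 'b) \<Rightarrow> nat \<Rightarrow> 'a \<Rightarrow> ('a \<Rightarrow>\<^sub>L real)" where
  "Phi p gradF gradM pis Fhs n x =
     (\<Sum>m = 1..n. mobil_w p m *\<^sub>R gradF (pis m) x) + mobil_w p (n + 1) *\<^sub>R gradM (Fhs (n + 1)) x x"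

text \<open>The (deterministic, exact) MoBIL-VI iterates pi_1..pi_N with models Fh_1..Fh_N.
  Round 0 is the initialisation: Fh_1 is an arbitrary model, and pi_1 solves the VI with Phi_0.\<close>
definition MoBIL_VI ::
  "real \<Rightarrow> 'a::real_normed_vector set \<Rightarrow> 'b::real_normed_vector set
   \<Rightarrow> ('a \<Rightarrow> 'a \<Rightarrow> ('a \<Rightarrow>\<^sub>L real)) \<Rightarrow> ('b \<Rightarrow> 'a \<Rightarrow> 'a \<Rightarrow> ('a \<Rightarrow>\<^sub>L real))
   \<Rightarrow> ('a \<Rightarrow> 'b \<Rightarrow> real) \<Rightarrow> nat \<Rightarrow> (nat \<Rightarrow> 'a) \<Rightarrow> (nat \<Rightarrow> 'b) \<Rightarrow> bool" where
  "MoBIL_VI p Pol Models gradF gradM hc N pis Fhs \<longleftrightarrow>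
     Fhs 1 \<in> Models \<and>
     (\<forall>n\<in>{1..<N}. Fhs (n + 1) \<in> Models \<and>
        (\<forall>G\<in>Models. (\<Sum>m = 1..n. mobil_w p m / real m * hc (pis m) (Fhs (n + 1)))
                    \<le> (\<Sum>m = 1..n. mobil_w p m / real m * hc (pis m) G))) \<and>
     (\<forall>n\<in>{0..<N}. pis (n + 1) \<in> Pol \<and>
        (\<forall>q'\<in>Pol. blinfun_apply (Phi p gradF gradM pis Fhs n (pis (n + 1))) (q' - pis (n + 1)) \<ge> 0))"

text \<open>regret^w(Pol) = max over Pol of sum_n w_n (f_n(pi_n) - f_n(x)), with f_n = F(pi_n, .).\<close>
definition regret_w :: "real \<Rightarrow> 'a set \<Rightarrow> ('a \<Rightarrow> 'a \<Rightarrow> real) \<Rightarrow> nat \<Rightarrow> (nat \<Rightarrow> 'a) \<Rightarrow> real" where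
  "regret_w p Pol F N pis = (SUP x\<in>Pol. \<Sum>n = 1..N. mobil_w p n * (F (pis n) (pis n) - F (pis n) x))"

definition avg_regret :: "real \<Rightarrow> 'a set \<Rightarrow> ('a \<Rightarrow> 'a \<Rightarrow> real) \<Rightarrow> nat \<Rightarrow> (nat \<Rightarrow> 'a) \<Rightarrow> real" where
  "avg_regret p Pol F N pis = regret_w p Pol F N pis / (\<Sum>n = 1..N. mobil_w p n)"

end

theory Submission
  imports Defs
begin

lemma sc_first_order:
  fixes g :: "'a::real_normed_vector \<Rightarrow> real"
  assumes sc: "strongly_convex_on S \<mu> g" and x: "x \<in> S" and y: "y \<in> S"
    and d: "(g has_derivative D) (at x within S)"
  shows "D (y - x) \<le> g y - g x - \<mu>/2 * (norm (y - x))^2"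
proof -
  have cS: "convex S" using sc by (simp add: strongly_convex_on_def)
  define p where "p = (\<lambda>t::real. x + t *\<^sub>R (y - x))"
  have pS: "p ` {0..1} \<subseteq> S"
  proof
    fix z assume "z \<in> p ` {0..1}"
    then obtain t where t: "t \<in> {0..1}" "z = p t" by auto
    have "(1 - t) *\<^sub>R x + t *\<^sub>R y \<in> S" using cS x y t(1) by (simp add: convex_alt)
    moreover have "p t = (1 - t) *\<^sub>R x + t *\<^sub>R y" unfolding p_def by (simp add: algebra_simps)
    ultimately show "z \<in> S" using t by simp
  qed
  have dp: "(p has_derivative (\<lambda>t. t *\<^sub>R (y - x))) (at 0 within {0..1})"
    unfolding p_def by (auto intro!: derivative_eq_intros)
  have p0: "p 0 = x" by (simp add: p_def)
  have dg: "(g has_derivative D) (at (p 0) within p ` {0..1})"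
    using has_derivative_subset[OF d pS] p0 by simp
  have lin: "linear D" using d has_derivative_linear by blast
  have "((g \<circ> p) has_derivative (D \<circ> (\<lambda>t. t *\<^sub>R (y - x)))) (at 0 within {0..1})"
    by (rule diff_chain_within[OF dp dg])
  moreover have "(D \<circ> (\<lambda>t. t *\<^sub>R (y - x))) = (*) (D (y - x))"
    using lin by (auto simp: fun_eq_iff linear_scale)
  ultimately have "((g \<circ> p) has_field_derivative D (y - x)) (at 0 within {0..1})"
    by (simp add: has_field_derivative_def)
  then have lim: "((\<lambda>t. ((g \<circ> p) t - (g \<circ> p) 0) / (t - 0)) \<longlongrightarrow> D (y - x)) (at_right 0)"
    by (simp add: has_field_derivative_iff at_within_Icc_at_right)
  have lim2: "((\<lambda>t. g y - g x - \<mu>/2 * (1 - t) * (norm (y - x))^2) \<longlongrightarrow> g y - g x - \<mu>/2 * (1 - 0) * (norm (y - x))^2) (at_right 0)"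
    by (intro tendsto_intros)
  have ev: "eventually (\<lambda>t. ((g \<circ> p) t - (g \<circ> p) 0) / (t - 0) \<le> g y - g x - \<mu>/2 * (1 - t) * (norm (y - x))^2) (at_right (0::real))"
    unfolding eventually_at_right_field
  proof (rule exI[of _ 1], intro conjI allI impI)
    fix t :: real assume t0: "0 < t" and t1: "t < 1"
    have t: "0 < t \<and> t < 1" using t0 t1 by simp
    have "g (t *\<^sub>R y + (1 - t) *\<^sub>R x) \<le> t * g y + (1 - t) * g x - \<mu> / 2 * t * (1 - t) * (norm (y - x))\<^sup>2"
      using sc x y t unfolding strongly_convex_on_def by auto
    moreover have "t *\<^sub>R y + (1 - t) *\<^sub>R x = p t" unfolding p_def by (simp add: algebra_simps)
    ultimately have "g (p t) - g x \<le> t * (g y - g x - \<mu>/2 * (1 - t) * (norm (y - x))^2)"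
      by (simp add: algebra_simps)
    then show "((g \<circ> p) t - (g \<circ> p) 0) / (t - 0) \<le> g y - g x - \<mu>/2 * (1 - t) * (norm (y - x))^2"
      using t p0 by (simp add: divide_le_eq mult.commute)
  qed simp
  have "D (y - x) \<le> g y - g x - \<mu>/2 * (1 - 0) * (norm (y - x))^2"
    by (rule tendsto_le[OF trivial_limit_at_right_real lim2 lim ev])
  then show ?thesis by simp
qed

lemma sc_sum:
  fixes f :: "'i \<Rightarrow> 'a::real_normed_vector \<Rightarrow> real"
  assumes fin: "finite I" and cS: "convex S"
    and sc: "\<And>i. i \<in> I \<Longrightarrow> strongly_convex_on S \<mu> (f i)"
    and a: "\<And>i. i \<in> I \<Longrightarrow> a i \<ge> 0"
  shows "strongly_convex_on S (\<mu> * sum a I) (\<lambda>x. \<Sum>i\<in>I. a i * f i x)"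
  unfolding strongly_convex_on_def
proof (intro conjI ballI cS)
  fix x y t assume x: "x \<in> S" and y: "y \<in> S" and t: "t \<in> {0..(1::real)}"
  have "(\<Sum>i\<in>I. a i * f i (t *\<^sub>R x + (1 - t) *\<^sub>R y))
      \<le> (\<Sum>i\<in>I. a i * (t * f i x + (1 - t) * f i y - \<mu> / 2 * t * (1 - t) * (norm (x - y))\<^sup>2))"
  proof (rule sum_mono)
    fix i assume i: "i \<in> I"
    show "a i * f i (t *\<^sub>R x + (1 - t) *\<^sub>R y)
      \<le> a i * (t * f i x + (1 - t) * f i y - \<mu> / 2 * t * (1 - t) * (norm (x - y))\<^sup>2)"
      using sc[OF i] x y t a[OF i] unfolding strongly_convex_on_def
      by (intro mult_left_mono) auto
  qed
  also have "\<dots> = t * (\<Sum>i\<in>I. a i * f i x) + (1 - t) * (\<Sum>i\<in>I. a i * f i y)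
       - \<mu> * sum a I / 2 * t * (1 - t) * (norm (x - y))\<^sup>2"
  proof -
    define K where "K = \<mu> / 2 * t * (1 - t) * (norm (x - y))\<^sup>2"
    have "(\<Sum>i\<in>I. a i * (t * f i x + (1 - t) * f i y - \<mu> / 2 * t * (1 - t) * (norm (x - y))\<^sup>2))
       = (\<Sum>i\<in>I. t * (a i * f i x) + (1 - t) * (a i * f i y) - a i * K)"
      by (intro sum.cong) (auto simp: K_def algebra_simps)
    also have "\<dots> = t * (\<Sum>i\<in>I. a i * f i x) + (1 - t) * (\<Sum>i\<in>I. a i * f i y) - sum a I * K"
      by (simp add: sum.distrib sum_subtractf sum_distrib_left sum_distrib_right)
    finally show ?thesis by (simp add: K_def algebra_simps)
  qed
  finally show "(\<Sum>i\<in>I. a i * f i (t *\<^sub>R x + (1 - t) *\<^sub>R y))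
      \<le> t * (\<Sum>i\<in>I. a i * f i x) + (1 - t) * (\<Sum>i\<in>I. a i * f i y)
       - \<mu> * sum a I / 2 * t * (1 - t) * (norm (x - y))\<^sup>2" .
qed

lemma min_sc:
  fixes g :: "'a::real_normed_vector \<Rightarrow> real"
  assumes sc: "strongly_convex_on S c g" and x: "x \<in> S" and y: "y \<in> S"
    and mn: "\<And>z. z \<in> S \<Longrightarrow> g x \<le> g z"
  shows "g y - g x \<ge> c/2 * (norm (y - x))^2"
proof -
  have ev: "eventually (\<lambda>t. c/2 * (1 - t) * (norm (y - x))^2 \<le> g y - g x) (at_right (0::real))"
    unfolding eventually_at_right_field
  proof (rule exI[of _ 1], intro conjI allI impI)
    fix t :: real assume t0: "0 < t" and t1: "t < 1"
    have "g (t *\<^sub>R y + (1 - t) *\<^sub>R x) \<le> t * g y + (1 - t) * g x - c / 2 * t * (1 - t) * (norm (y - x))\<^sup>2"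
      using sc x y t0 t1 unfolding strongly_convex_on_def by auto
    moreover have "t *\<^sub>R y + (1 - t) *\<^sub>R x \<in> S"
      using sc x y t0 t1 unfolding strongly_convex_on_def by (auto intro: convexD)
    ultimately have "t * (c/2 * (1 - t) * (norm (y - x))^2) \<le> t * (g y - g x)"
      using mn[of "t *\<^sub>R y + (1 - t) *\<^sub>R x"] by (simp add: algebra_simps)
    then show "c/2 * (1 - t) * (norm (y - x))^2 \<le> g y - g x"
      using t0 by simp
  qed simp
  have lim: "((\<lambda>t. c/2 * (1 - t) * (norm (y - x))^2) \<longlongrightarrow> c/2 * (1 - 0) * (norm (y - x))^2) (at_right 0)"
    by (intro tendsto_intros)
  have "c/2 * (1 - 0) * (norm (y - x))^2 \<le> g y - g x"
    by (rule tendsto_le[OF trivial_limit_at_right_real tendsto_const lim ev])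
  then show ?thesis by simp
qed

lemma quad_bound:
  fixes e d c :: real
  assumes "c > 0"
  shows "e * d - c * d^2 \<le> e^2 / (4 * c)"
proof -
  have "0 \<le> (e - 2 * c * d)^2" by simp
  then have "4 * c * (e * d - c * d^2) \<le> e^2" by (simp add: power2_eq_square algebra_simps)
  then show ?thesis using assms by (simp add: le_divide_eq mult.commute)
qed

lemma telesc:
  fixes f :: "nat \<Rightarrow> 'a \<Rightarrow> real"
  shows "(\<Sum>n=1..N. (\<Sum>m=1..n. f m (q n)) - (\<Sum>m=1..n. f m (q (Suc n))))
         = (\<Sum>n=1..N. f n (q n)) - (\<Sum>m=1..N. f m (q (Suc N)))"
  by (induction N) (simp_all add: algebra_simps)

lemma inv_sq_sum: "N \<ge> 1 \<Longrightarrow> (\<Sum>n=1..N. (1 / real n)^2) \<le> 2 - 1 / real N"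
proof (induction N)
  case 0 then show ?case by simp
next
  case (Suc N)
  show ?case
  proof (cases "N = 0")
    case True then show ?thesis by simp
  next
    case False
    then have IH: "(\<Sum>n=1..N. (1 / real n)^2) \<le> 2 - 1 / real N" using Suc by simp
    have "(1 / real (Suc N))^2 = 1 / (real (Suc N) * real (Suc N))"
      by (simp add: power2_eq_square)
    also have "\<dots> \<le> 1 / (real N * real (Suc N))"
      using False by (intro divide_left_mono mult_right_mono) auto
    also have "\<dots> = 1 / real N - 1 / real (Suc N)"
      using False by (simp add: field_simps)
    finally have "(1 / real (Suc N))^2 \<le> 1 / real N - 1 / real (Suc N)" .
    then show ?thesis using IH by simp
  qed
qed

theorem proposition1:
  fixes Pol :: "'a::real_normed_vector set"
    and Models :: "'b::real_normed_vector set"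
    and F :: "'a \<Rightarrow> 'a \<Rightarrow> real"
    and gradF :: "'a \<Rightarrow> 'a \<Rightarrow> ('a \<Rightarrow>\<^sub>L real)"
    and Fev :: "'b \<Rightarrow> 'a \<Rightarrow> 'a \<Rightarrow> real"
    and gradM :: "'b \<Rightarrow> 'a \<Rightarrow> 'a \<Rightarrow> ('a \<Rightarrow>\<^sub>L real)"
    and hc :: "'a \<Rightarrow> 'b \<Rightarrow> real"
    and hgrad :: "'a \<Rightarrow> 'b \<Rightarrow> ('b \<Rightarrow>\<^sub>L real)"
    and L \<mu>f \<mu>h Gf Gh eps :: real
    and N :: nat
    and pis :: "nat \<Rightarrow> 'a"
    and Fhs :: "nat \<Rightarrow> 'b"
  assumes Pol_compact: "compact Pol" and Pol_convex: "convex Pol"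
    and Models_convex: "convex Models"
    and F_deriv: "\<And>q' x. q' \<in> Pol \<Longrightarrow> x \<in> Pol \<Longrightarrow>
                    (F q' has_derivative blinfun_apply (gradF q' x)) (at x within Pol)"
    and M_deriv: "\<And>Fh q' x. Fh \<in> Models \<Longrightarrow> q' \<in> Pol \<Longrightarrow> x \<in> Pol \<Longrightarrow>
                    (Fev Fh q' has_derivative blinfun_apply (gradM Fh q' x)) (at x within Pol)"
    and L_nonneg: "L \<ge> 0"
    and M_lip: "\<And>Fh x q'. Fh \<in> Models \<Longrightarrow> x \<in> Pol \<Longrightarrow> q' \<in> Pol \<Longrightarrow>
                    norm (gradM Fh x x - gradM Fh q' q') \<le> L * norm (x - q')"
    and h_deriv: "\<And>n Fh. n \<in> {1..N} \<Longrightarrow> Fh \<in> Models \<Longrightarrow>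
                    (hc (pis n) has_derivative blinfun_apply (hgrad (pis n) Fh)) (at Fh within Models)"
    and h_bound: "\<And>n Fh. n \<in> {1..N} \<Longrightarrow> Fh \<in> Models \<Longrightarrow>
                    hc (pis n) Fh \<ge> (norm (gradF (pis n) (pis n) - gradM Fh (pis n) (pis n)))\<^sup>2"
    and \<mu>f_pos: "\<mu>f > 0" and \<mu>h_pos: "\<mu>h > 0"
    and f_sc: "\<And>n. n \<in> {1..N} \<Longrightarrow> strongly_convex_on Pol \<mu>f (F (pis n))"
    and f_grad_bd: "\<And>n x. n \<in> {1..N} \<Longrightarrow> x \<in> Pol \<Longrightarrow> norm (gradF (pis n) x) \<le> Gf"
    and h_sc: "\<And>n. n \<in> {1..N} \<Longrightarrow> strongly_convex_on Models \<mu>h (hc (pis n))"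
    and h_grad_bd: "\<And>n Fh. n \<in> {1..N} \<Longrightarrow> Fh \<in> Models \<Longrightarrow> norm (hgrad (pis n) Fh) \<le> Gh"
    and eps_def: "\<And>K (\<theta> :: nat \<Rightarrow> real) (qs :: nat \<Rightarrow> 'a).
                    (\<forall>n\<in>{1..K}. \<theta> n > 0) \<Longrightarrow> (\<Sum>n = 1..K. \<theta> n) = 1 \<Longrightarrow>
                    (\<forall>n\<in>{1..K}. qs n \<in> Pol) \<Longrightarrow>
                    \<exists>Fh\<in>Models. (\<Sum>n = 1..K. \<theta> n * hc (qs n) Fh) \<le> eps"
    and N_pos: "N \<ge> 1"
    and alg: "MoBIL_VI 0 Pol Models gradF gradM hc N pis Fhs"
  shows "avg_regret 0 Pol F N pis
           \<le> Gh\<^sup>2 / (2 * \<mu>f * \<mu>h) * (1 / real N) + eps / (2 * \<mu>f) * ((ln (real N) + 1) / real N)"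
proof -
  have w1: "\<And>m. m \<ge> 1 \<Longrightarrow> mobil_w 0 m = 1" by (simp add: mobil_w_def)
  have NN: "real N \<ge> 1" using N_pos by simp
  have FhsM: "\<And>n. n \<in> {1..N} \<Longrightarrow> Fhs n \<in> Models"
  proof -
    fix n assume n: "n \<in> {1..N}"
    show "Fhs n \<in> Models"
    proof (cases "n = 1")
      case True then show ?thesis using alg by (simp add: MoBIL_VI_def)
    next
      case False
      then have "n - 1 \<in> {1..<N}" using n by auto
      then have "Fhs (n - 1 + 1) \<in> Models" using alg unfolding MoBIL_VI_def by blast
      then show ?thesis using n by simp
    qed
  qed
  have pisP: "\<And>n. n \<in> {1..N} \<Longrightarrow> pis n \<in> Pol"
  proof -
    fix n assume n: "n \<in> {1..N}"
    then have "n - 1 \<in> {0..<N}" by auto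
    then have "pis (n - 1 + 1) \<in> Pol" using alg unfolding MoBIL_VI_def by blast
    then show "pis n \<in> Pol" using n by simp
  qed
  have VI: "\<And>k z. k \<in> {0..<N} \<Longrightarrow> z \<in> Pol \<Longrightarrow>
      (\<Sum>m=1..k. blinfun_apply (gradF (pis m) (pis (Suc k))) (z - pis (Suc k)))
      + blinfun_apply (gradM (Fhs (Suc k)) (pis (Suc k)) (pis (Suc k))) (z - pis (Suc k)) \<ge> 0"
  proof -
    fix k z assume k: "k \<in> {0..<N}" and z: "z \<in> Pol"
    have "blinfun_apply (Phi 0 gradF gradM pis Fhs k (pis (k + 1))) (z - pis (k + 1)) \<ge> 0"
      using alg k z unfolding MoBIL_VI_def by blast
    moreover have "(\<Sum>m = 1..k. mobil_w 0 m *\<^sub>R gradF (pis m) (pis (k+1))) = (\<Sum>m = 1..k. gradF (pis m) (pis (k+1)))"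
      by (intro sum.cong) (auto simp: w1)
    ultimately show "(\<Sum>m=1..k. blinfun_apply (gradF (pis m) (pis (Suc k))) (z - pis (Suc k)))
      + blinfun_apply (gradM (Fhs (Suc k)) (pis (Suc k)) (pis (Suc k))) (z - pis (Suc k)) \<ge> 0"
      by (simp add: Phi_def w1 blinfun.sum_left plus_blinfun.rep_eq)
  qed
  have FTL: "\<And>n G. n \<in> {1..<N} \<Longrightarrow> G \<in> Models \<Longrightarrow>
      (\<Sum>m=1..n. 1 / real m * hc (pis m) (Fhs (Suc n))) \<le> (\<Sum>m=1..n. 1 / real m * hc (pis m) G)"
  proof -
    fix n G assume n: "n \<in> {1..<N}" and G: "G \<in> Models"
    have "(\<Sum>m = 1..n. mobil_w 0 m / real m * hc (pis m) (Fhs (n + 1)))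
                    \<le> (\<Sum>m = 1..n. mobil_w 0 m / real m * hc (pis m) G)"
      using alg n G unfolding MoBIL_VI_def by blast
    moreover have "\<And>H. (\<Sum>m = 1..n. mobil_w 0 m / real m * hc (pis m) H) = (\<Sum>m=1..n. 1 / real m * hc (pis m) H)"
      by (intro sum.cong) (auto simp: w1)
    ultimately show "(\<Sum>m=1..n. 1 / real m * hc (pis m) (Fhs (Suc n))) \<le> (\<Sum>m=1..n. 1 / real m * hc (pis m) G)"
      by simp
  qed
  define e where "e n = norm (gradF (pis n) (pis n) - gradM (Fhs n) (pis n) (pis n))" for n
  define \<Psi> where "\<Psi> n x = (\<Sum>m=1..n. F (pis m) x)" for n x
  have pstep: "\<Psi> n (pis n) - \<Psi> n z \<le> (e n)^2 / (2 * \<mu>f * real n)" if n: "n \<in> {1..N}" and z: "z \<in> Pol" for n z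
  proof -
    define x where "x = pis n"
    define d where "d = norm (z - x)"
    have xP: "x \<in> Pol" using pisP[OF n] by (simp add: x_def)
    have fo: "blinfun_apply (gradF (pis m) x) (z - x) \<le> F (pis m) z - F (pis m) x - \<mu>f/2 * d^2"
      if m: "m \<in> {1..n}" for m
    proof -
      have mN: "m \<in> {1..N}" using m n by auto
      show ?thesis unfolding d_def
        by (rule sc_first_order[OF f_sc[OF mN] xP z F_deriv[OF pisP[OF mN] xP]])
    qed
    have "(\<Sum>m=1..n. blinfun_apply (gradF (pis m) x) (z - x)) \<le> (\<Sum>m=1..n. F (pis m) z - F (pis m) x - \<mu>f/2 * d^2)"
      by (rule sum_mono) (rule fo)
    also have "\<dots> = \<Psi> n z - \<Psi> n x - real n * (\<mu>f/2 * d^2)"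
      by (simp add: \<Psi>_def sum_subtractf)
    finally have s1: "(\<Sum>m=1..n. blinfun_apply (gradF (pis m) x) (z - x)) \<le> \<Psi> n z - \<Psi> n x - real n * (\<mu>f/2 * d^2)" .
    obtain k where k: "n = Suc k" using n by (cases n) auto
    have kN: "k \<in> {0..<N}" using n k by auto
    have vi: "(\<Sum>m=1..k. blinfun_apply (gradF (pis m) x) (z - x))
      + blinfun_apply (gradM (Fhs n) x x) (z - x) \<ge> 0"
      using VI[OF kN z] k by (simp add: x_def)
    have split: "(\<Sum>m=1..n. blinfun_apply (gradF (pis m) x) (z - x))
       = (\<Sum>m=1..k. blinfun_apply (gradF (pis m) x) (z - x)) + blinfun_apply (gradF (pis n) x) (z - x)"
      using k by simp
    have "\<bar>blinfun_apply (gradF (pis n) x - gradM (Fhs n) x x) (z - x)\<bar> \<le> e n * d"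
      unfolding e_def d_def x_def using norm_blinfun[of "gradF (pis n) (pis n) - gradM (Fhs n) (pis n) (pis n)" "z - pis n"]
      by simp
    then have "blinfun_apply (gradF (pis n) x) (z - x) - blinfun_apply (gradM (Fhs n) x x) (z - x) \<ge> - (e n * d)"
      by (simp add: blinfun.diff_left)
    then have "\<Psi> n x - \<Psi> n z \<le> e n * d - (real n * \<mu>f / 2) * d^2"
      using s1 vi split by (simp add: algebra_simps)
    also have "\<dots> \<le> (e n)^2 / (4 * (real n * \<mu>f / 2))"
      by (rule quad_bound) (use n \<mu>f_pos in auto)
    also have "\<dots> = (e n)^2 / (2 * \<mu>f * real n)" by (simp add: algebra_simps)
    finally show ?thesis by (simp add: x_def)
  qed
  define a where "a m = 1 / real m" for m :: nat
  define \<Phi> where "\<Phi> n G = (\<Sum>m=1..n. a m * hc (pis m) G)" for n G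
  define A where "A n = (\<Sum>m=1..n. a m)" for n
  have mstep: "\<Phi> n (Fhs n) - \<Phi> n y \<le> (a n)^2 * Gh^2 / (2 * \<mu>h)" if n: "n \<in> {1..N}" and y: "y \<in> Models" for n y
  proof -
    define x where "x = Fhs n"
    define d where "d = norm (y - x)"
    have xM: "x \<in> Models" using FhsM[OF n] by (simp add: x_def)
    obtain k where k: "n = Suc k" using n by (cases n) auto
    have i: "\<Phi> k y - \<Phi> k x \<ge> \<mu>h * A k / 2 * d^2"
    proof (cases "k = 0")
      case True then show ?thesis by (simp add: \<Phi>_def A_def)
    next
      case False
      then have kN: "k \<in> {1..<N}" using n k by auto
      have sc: "strongly_convex_on Models (\<mu>h * A k) (\<Phi> k)"
        unfolding \<Phi>_def[abs_def] A_def
        by (rule sc_sum[OF _ Models_convex]) (use kN in \<open>auto intro!: h_sc simp: a_def\<close>)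
      have "\<Phi> k y - \<Phi> k x \<ge> \<mu>h * A k / 2 * (norm (y - x))^2"
        by (rule min_sc[OF sc xM y]) (use FTL[OF kN] k in \<open>auto simp: \<Phi>_def a_def x_def\<close>)
      then show ?thesis by (simp add: d_def)
    qed
    have fo: "blinfun_apply (hgrad (pis n) x) (y - x) \<le> hc (pis n) y - hc (pis n) x - \<mu>h/2 * d^2"
      unfolding d_def by (rule sc_first_order[OF h_sc[OF n] xM y h_deriv[OF n xM]])
    have "\<bar>blinfun_apply (hgrad (pis n) x) (y - x)\<bar> \<le> Gh * d"
      unfolding d_def using norm_blinfun[of "hgrad (pis n) x" "y - x"] h_grad_bd[OF n xM]
      mult_right_mono[OF h_grad_bd[OF n xM] norm_ge_zero[of "y - x"]]
      by (simp only: real_norm_def)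
    then have ii: "hc (pis n) x - hc (pis n) y \<le> Gh * d - \<mu>h/2 * d^2" using fo by linarith
    have an: "a n > 0" using n by (simp add: a_def)
    have An: "A n = A k + a n" using k by (simp add: A_def)
    have A1: "A n \<ge> 1"
    proof -
      have "a 1 \<le> A n" unfolding A_def using n by (intro member_le_sum) (auto simp: a_def)
      then show ?thesis by (simp add: a_def)
    qed
    have Phn: "\<Phi> n G = \<Phi> k G + a n * hc (pis n) G" for G using k by (simp add: \<Phi>_def)
    have "\<Phi> n x - \<Phi> n y = (\<Phi> k x - \<Phi> k y) + a n * (hc (pis n) x - hc (pis n) y)"
      by (simp add: Phn algebra_simps)
    also have "\<dots> \<le> - (\<mu>h * A k / 2 * d^2) + a n * (Gh * d - \<mu>h/2 * d^2)"
      using i ii an by (intro add_mono mult_left_mono) auto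
    also have "\<dots> = (a n * Gh) * d - (\<mu>h * A n / 2) * d^2" by (simp add: An algebra_simps)
    also have "\<dots> \<le> (a n * Gh)^2 / (4 * (\<mu>h * A n / 2))"
      by (rule quad_bound) (use A1 \<mu>h_pos in auto)
    also have "\<dots> \<le> (a n * Gh)^2 / (4 * (\<mu>h / 2))"
      using A1 \<mu>h_pos by (intro divide_left_mono) (auto simp: mult_pos_pos)
    also have "\<dots> = (a n)^2 * Gh^2 / (2 * \<mu>h)" by (simp add: power_mult_distrib)
    finally show ?thesis by (simp add: x_def)
  qed
  have AN: "A N = harm N" by (simp add: A_def a_def harm_def divide_inverse)
  have Apos: "A N > 0" using AN N_pos by simp
  obtain Fh where FhM: "Fh \<in> Models" and Fhb: "(\<Sum>n = 1..N. a n / A N * hc (pis n) Fh) \<le> eps"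
  proof -
    have "\<exists>Fh\<in>Models. (\<Sum>n = 1..N. (\<lambda>n. a n / A N) n * hc (pis n) Fh) \<le> eps"
    proof (rule eps_def)
      show "\<forall>n\<in>{1..N}. 0 < a n / A N" using Apos by (auto simp: a_def)
      show "(\<Sum>n = 1..N. a n / A N) = 1" using Apos by (simp add: sum_divide_distrib[symmetric] A_def)
      show "\<forall>n\<in>{1..N}. pis n \<in> Pol" using pisP by blast
    qed
    then show ?thesis using that by auto
  qed
  have hnn: "\<And>n G. n \<in> {1..N} \<Longrightarrow> G \<in> Models \<Longrightarrow> hc (pis n) G \<ge> 0"
    using h_bound by (meson order_trans zero_le_power2)
  have eps_nn: "eps \<ge> 0"
  proof -
    have "0 \<le> (\<Sum>n = 1..N. a n / A N * hc (pis n) Fh)"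
      using Apos hnn[OF _ FhM] by (intro sum_nonneg) (auto simp: a_def)
    then show ?thesis using Fhb by linarith
  qed
  have PhiN: "\<Phi> N Fh \<le> A N * eps"
  proof -
    have "\<Phi> N Fh = A N * (\<Sum>n = 1..N. a n / A N * hc (pis n) Fh)"
      using Apos by (simp add: \<Phi>_def sum_distrib_left)
    then show ?thesis using Fhb Apos by (simp add: mult_left_mono)
  qed
  have harmb: "A N \<le> ln (real N) + 1"
    using euler_mascheroni_sequence_decreasing[of 1 N] N_pos AN by (simp add: harm_def)
  define r where "r k = (if k \<le> N then Fhs k else Fh)" for k
  have mtot: "(\<Sum>n=1..N. a n * hc (pis n) (Fhs n)) \<le> Gh^2 / \<mu>h + (ln (real N) + 1) * eps"
  proof -
    have "(\<Sum>n=1..N. a n * hc (pis n) (Fhs n)) - \<Phi> N Fh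
        = (\<Sum>n=1..N. (\<Sum>m=1..n. a m * hc (pis m) (r n)) - (\<Sum>m=1..n. a m * hc (pis m) (r (Suc n))))"
    proof -
      have "(\<Sum>n=1..N. (\<Sum>m=1..n. a m * hc (pis m) (r n)) - (\<Sum>m=1..n. a m * hc (pis m) (r (Suc n))))
          = (\<Sum>n=1..N. a n * hc (pis n) (r n)) - (\<Sum>m=1..N. a m * hc (pis m) (r (Suc N)))"
        by (rule telesc)
      also have "\<dots> = (\<Sum>n=1..N. a n * hc (pis n) (Fhs n)) - \<Phi> N Fh"
        by (simp add: r_def \<Phi>_def)
      finally show ?thesis by simp
    qed
    also have "\<dots> \<le> (\<Sum>n=1..N. (a n)^2 * Gh^2 / (2 * \<mu>h))"
    proof (rule sum_mono)
      fix n assume n: "n \<in> {1..N}"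
      have rM: "r (Suc n) \<in> Models" using FhsM FhM n by (auto simp: r_def)
      have "r n = Fhs n" using n by (simp add: r_def)
      then show "(\<Sum>m=1..n. a m * hc (pis m) (r n)) - (\<Sum>m=1..n. a m * hc (pis m) (r (Suc n))) \<le> (a n)^2 * Gh^2 / (2 * \<mu>h)"
        using mstep[OF n rM] by (simp add: \<Phi>_def)
    qed
    also have "\<dots> = (\<Sum>n=1..N. (1 / real n)^2) * (Gh^2 / (2 * \<mu>h))"
      by (simp add: sum_distrib_right sum_divide_distrib a_def)
    also have "\<dots> \<le> 2 * (Gh^2 / (2 * \<mu>h))"
    proof (rule mult_right_mono)
      have "0 \<le> 1 / real N" by simp
      then show "(\<Sum>n=1..N. (1 / real n)^2) \<le> 2" using inv_sq_sum[OF N_pos] by linarith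
    qed (use \<mu>h_pos in simp)
    finally have "(\<Sum>n=1..N. a n * hc (pis n) (Fhs n)) \<le> \<Phi> N Fh + Gh^2 / \<mu>h" by simp
    moreover have "A N * eps \<le> (ln (real N) + 1) * eps" using harmb eps_nn by (rule mult_right_mono)
    ultimately show ?thesis using PhiN by linarith
  qed
  define B where "B = (Gh^2 / \<mu>h + (ln (real N) + 1) * eps) / (2 * \<mu>f)"
  have ptot: "(\<Sum>n=1..N. F (pis n) (pis n) - F (pis n) y) \<le> B" if y: "y \<in> Pol" for y
  proof -
    define q where "q k = (if k \<le> N then pis k else y)" for k
    have "(\<Sum>n=1..N. F (pis n) (pis n) - F (pis n) y)
        = (\<Sum>n=1..N. \<Psi> n (q n) - \<Psi> n (q (Suc n)))"
    proof -
      have "(\<Sum>n=1..N. \<Psi> n (q n) - \<Psi> n (q (Suc n)))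
          = (\<Sum>n=1..N. F (pis n) (q n)) - (\<Sum>m=1..N. F (pis m) (q (Suc N)))"
        unfolding \<Psi>_def by (rule telesc)
      also have "\<dots> = (\<Sum>n=1..N. F (pis n) (pis n) - F (pis n) y)"
        by (simp add: q_def sum_subtractf)
      finally show ?thesis by simp
    qed
    also have "\<dots> \<le> (\<Sum>n=1..N. a n * hc (pis n) (Fhs n) / (2 * \<mu>f))"
    proof (rule sum_mono)
      fix n assume n: "n \<in> {1..N}"
      have qP: "q (Suc n) \<in> Pol" using pisP y n by (auto simp: q_def)
      have "q n = pis n" using n by (simp add: q_def)
      then have "\<Psi> n (q n) - \<Psi> n (q (Suc n)) \<le> (e n)^2 / (2 * \<mu>f * real n)"
        using pstep[OF n qP] by simp
      also have "\<dots> = a n * (e n)^2 / (2 * \<mu>f)" by (simp add: a_def)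
      also have "\<dots> \<le> a n * hc (pis n) (Fhs n) / (2 * \<mu>f)"
        using h_bound[OF n FhsM[OF n]] \<mu>f_pos n
        by (intro divide_right_mono mult_left_mono) (auto simp: e_def a_def)
      finally show "\<Psi> n (q n) - \<Psi> n (q (Suc n)) \<le> a n * hc (pis n) (Fhs n) / (2 * \<mu>f)" .
    qed
    also have "\<dots> = (\<Sum>n=1..N. a n * hc (pis n) (Fhs n)) / (2 * \<mu>f)"
      by (simp add: sum_divide_distrib)
    also have "\<dots> \<le> B" unfolding B_def using mtot \<mu>f_pos by (intro divide_right_mono) auto
    finally show ?thesis .
  qed
  have Pne: "Pol \<noteq> {}" using pisP[of 1] N_pos by auto
  have reg: "regret_w 0 Pol F N pis \<le> B"
  proof -
    have "regret_w 0 Pol F N pis = (SUP y\<in>Pol. \<Sum>n=1..N. F (pis n) (pis n) - F (pis n) y)"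
      unfolding regret_w_def by (intro SUP_cong refl sum.cong) (auto simp: w1)
    also have "\<dots> \<le> B" using Pne ptot by (intro cSUP_least) auto
    finally show ?thesis .
  qed
  have den: "(\<Sum>n = 1..N. mobil_w 0 n) = real N"
    by (simp add: w1)
  have "avg_regret 0 Pol F N pis \<le> B / real N"
    unfolding avg_regret_def den using reg NN by (intro divide_right_mono) auto
  also have "\<dots> = Gh\<^sup>2 / (2 * \<mu>f * \<mu>h) * (1 / real N) + eps / (2 * \<mu>f) * ((ln (real N) + 1) / real N)"
  proof -
    have "B / real N = (Gh^2 / \<mu>h) / (2 * \<mu>f) / real N + ((ln (real N) + 1) * eps) / (2 * \<mu>f) / real N"
      unfolding B_def by (simp add: add_divide_distrib)
    also have "(Gh^2 / \<mu>h) / (2 * \<mu>f) / real N = Gh\<^sup>2 / (2 * \<mu>f * \<mu>h) * (1 / real N)"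
      by (simp add: divide_divide_eq_left mult_ac)
    also have "((ln (real N) + 1) * eps) / (2 * \<mu>f) / real N = eps / (2 * \<mu>f) * ((ln (real N) + 1) / real N)"
      by (simp add: divide_divide_eq_left mult_ac)
    finally show ?thesis .
  qed
  finally show ?thesis .
qed

end
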